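(* Let $1<d\le n$ be integers, let $C$ be a real symmetric $n\times n$ matrix with unit diagonal, and let $T_{n,d}=\{Y\in\mathbb{R}^{n\times d}: \|Y_i\|_2=1 \text{ for every row } Y_i\}$. For $Y\in T_{n,d}$ set $\psi=YY^T-C$ and $F_Y=2\psi Y$. Suppose $Y\in T_{n,d}$ satisfies \[ F_Y-\operatorname{diag}(F_YY^T)\,Y=0. \] Define the diagonal matrix $\lambda=\tfrac12\operatorname{diag}(F_YY^T)$ and $C(\lambda)=C+\lambda$. Then there exist an orthogonal matrix $Q$ and a diagonal matrix $D$ with \[ C(\lambda)=QDQ^T,\qquad YY^T=QD^*Q^T, \] where $D^*$ is a diagonal matrix obtained from $D$ by selecting at most $d$ nonnegative diagonal entries of $D$ (each selected entry keeping its position) and setting all other entries to zero.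
   Context: For a square matrix $A$, $\operatorname{diag}(A)$ denotes the diagonal matrix with the same diagonal as $A$, i.e. $\operatorname{diag}(A)_{ij}=\delta_{ij}A_{ij}$. The quantity $F_Y-\operatorname{diag}(F_YY^T)Y$ is the gradient on $T_{n,d}$ (with the Frobenius metric) of $F(Y)=\tfrac12\|YY^T-C\|_F^2$, whose Euclidean differential is $F_Y$. *)

theory Defs
  imports "HOL-Analysis.Analysis"
begin

definition diag_part :: "real^'n^'n \<Rightarrow> real^'n^'n" where
  "diag_part A = (\<chi> i j. if i = j then A $ i $ j else 0)"

definition is_diagonal :: "real^'n^'n \<Rightarrow> bool" where
  "is_diagonal A \<longleftrightarrow> (\<forall>i j. i \<noteq> j \<longrightarrow> A $ i $ j = 0)"

definition T_nd :: "(real^'d^'n) set" where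
  "T_nd = {Y. \<forall>i. norm (Y $ i) = 1}"

end

theory Submission
  imports Defs
begin

lemma quad_aux:
  fixes a b :: real
  assumes "\<And>t. 2*t*a + t^2*b \<le> 0"
  shows "a \<le> 0"
proof (rule ccontr)
  assume "\<not> a \<le> 0"
  hence a: "a > 0" by simp
  define t where "t = a / (\<bar>b\<bar> + 1)"
  have t: "t > 0" using a by (simp add: t_def)
  have "t * (\<bar>b\<bar> + 1) = a" unfolding t_def by simp
  hence "t * \<bar>b\<bar> + t = a" by (simp add: algebra_simps)
  hence lt: "t * \<bar>b\<bar> < a" using t by linarith
  have "t*(t*\<bar>b\<bar>) < t * a" using mult_strict_left_mono[OF lt t] .
  moreover have "t*t*(-\<bar>b\<bar>) \<le> t*t*b" by (rule mult_left_mono) auto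
  moreover have "t*a > 0" using t a by simp
  ultimately have "2*t*a + t^2*b > 0" by (simp add: power2_eq_square algebra_simps)
  with assms[of t] show False by simp
qed

lemma sym_inner:
  fixes A :: "real^'n^'n"
  assumes "transpose A = A"
  shows "inner v (A *v w) = inner (A *v v) w"
  by (metis assms dot_lmul_matrix transpose_matrix_vector)

lemma sym_eig:
  fixes A :: "real^'n^'n"
  assumes sym: "transpose A = A" and W: "subspace W" "W \<noteq> {0}" and inv: "\<forall>w\<in>W. A *v w \<in> W"
  shows "\<exists>v \<mu>. v \<in> W \<and> norm v = 1 \<and> A *v v = \<mu> *\<^sub>R v"
proof -
  let ?K = "W \<inter> sphere 0 1"
  let ?q = "\<lambda>x. inner x (A *v x)"
  have cK: "compact ?K"
    by (rule closed_Int_compact) (auto simp: closed_subspace W(1))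
  obtain w where w: "w \<in> W" "w \<noteq> 0" using W subspace_0 by blast
  have "w /\<^sub>R norm w \<in> ?K" using w W(1) by (simp add: subspace_scale)
  hence ne: "?K \<noteq> {}" by blast
  have cont: "continuous_on ?K ?q"
    by (intro continuous_intros)
  obtain v where v: "v \<in> ?K" and vmax: "\<forall>y\<in>?K. ?q y \<le> ?q v"
    using continuous_attains_sup[OF cK ne cont] by blast
  define \<mu> where "\<mu> = ?q v"
  have vW: "v \<in> W" and nv: "norm v = 1" using v by auto
  have bound: "?q y \<le> \<mu> * inner y y" if "y \<in> W" for y
  proof (cases "y = 0")
    case True then show ?thesis by simp
  next
    case False
    have "y /\<^sub>R norm y \<in> ?K" using that False W(1) by (simp add: subspace_scale)
    hence "?q (y /\<^sub>R norm y) \<le> \<mu>" using vmax \<mu>_def by blast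
    moreover have "?q (y /\<^sub>R norm y) = ?q y / (norm y)^2"
      by (simp add: matrix_vector_mult_scaleR power2_eq_square field_simps)
    ultimately have "?q y \<le> \<mu> * (norm y)^2" using False
      by (simp add: divide_le_eq)
    then show ?thesis by (simp add: power2_norm_eq_inner)
  qed
  have vv: "inner v v = 1" using nv by (simp add: power2_norm_eq_inner[symmetric])
  have orth: "inner u (A *v v) \<le> 0" if "u \<in> W" "inner u v = 0" for u
  proof (rule quad_aux[where b = "?q u - \<mu> * inner u u"])
    fix t :: real
    have "v + t *\<^sub>R u \<in> W" using vW that W(1) by (simp add: subspace_add subspace_scale)
    hence h1: "?q (v + t *\<^sub>R u) \<le> \<mu> * inner (v + t *\<^sub>R u) (v + t *\<^sub>R u)" by (rule bound)
    have h2: "?q (v + t *\<^sub>R u) = \<mu> + 2*t*inner u (A *v v) + t^2 * ?q u"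
      using sym_inner[OF sym, of v u]
      by (simp add: \<mu>_def matrix_vector_right_distrib matrix_vector_mult_scaleR inner_add inner_commute power2_eq_square algebra_simps)
    have h3: "inner (v + t *\<^sub>R u) (v + t *\<^sub>R u) = 1 + t^2 * inner u u"
      using that vv by (simp add: inner_add_left inner_add_right inner_commute power2_eq_square algebra_simps)
    show "2*t*inner u (A *v v) + t^2 * (?q u - \<mu> * inner u u) \<le> 0"
      using h1 unfolding h2 h3 by (simp add: algebra_simps)
  qed
  define r where "r = A *v v - \<mu> *\<^sub>R v"
  have rW: "r \<in> W" using inv vW W(1) by (simp add: r_def subspace_diff subspace_scale)
  have rv: "inner r v = 0"
  proof -
    have "inner r v = inner (A *v v) v - \<mu> * inner v v" by (simp add: r_def inner_diff_left)
    also have "\<dots> = 0" by (simp add: vv \<mu>_def inner_commute)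
    finally show ?thesis .
  qed
  have "inner r (A *v v) \<le> 0" using orth rW rv by blast
  moreover have "inner (-r) (A *v v) \<le> 0" using rW rv W(1) by (intro orth) (auto simp: subspace_neg)
  ultimately have "inner r (A *v v) = 0" by simp
  hence "inner r r = 0" using rv by (simp add: r_def inner_diff_right)
  hence "r = 0" by simp
  then show ?thesis using vW nv by (auto simp: r_def)
qed


lemma common_basis_aux:
  fixes M X :: "real^'n^'n"
  assumes symM: "transpose M = M" and symX: "transpose X = X" and comm: "M ** X = X ** M"
  shows "subspace V \<Longrightarrow> (\<forall>w\<in>V. M *v w \<in> V) \<Longrightarrow> (\<forall>w\<in>V. X *v w \<in> V) \<Longrightarrow>
    \<exists>B. B \<subseteq> V \<and> (\<forall>b\<in>B. norm b = 1 \<and> (\<exists>\<mu>. M *v b = \<mu> *\<^sub>R b) \<and> (\<exists>e. X *v b = e *\<^sub>R b))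
       \<and> pairwise orthogonal B \<and> V \<subseteq> span B"
proof (induction "dim V" arbitrary: V rule: less_induct)
  case less
  show ?case
  proof (cases "V = {0}")
    case True
    then show ?thesis by (intro exI[of _ "{}"]) auto
  next
    case False
    obtain v \<mu> where v: "v \<in> V" "norm v = 1" "M *v v = \<mu> *\<^sub>R v"
      using sym_eig[OF symM less.prems(1) False] less.prems(2) by blast
    define W where "W = {w\<in>V. M *v w = \<mu> *\<^sub>R w}"
    have sW: "subspace W"
      using less.prems(1) unfolding W_def subspace_def
      by (auto simp: matrix_vector_right_distrib matrix_vector_mult_scaleR algebra_simps)
    have "v \<in> W" "v \<noteq> 0" using v by (auto simp: W_def)
    hence Wne: "W \<noteq> {0}" by blast
    have invW: "\<forall>w\<in>W. X *v w \<in> W"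
    proof
      fix w assume w: "w \<in> W"
      have "M *v (X *v w) = X *v (M *v w)" by (simp add: matrix_vector_mul_assoc comm)
      also have "\<dots> = \<mu> *\<^sub>R (X *v w)" using w by (simp add: W_def matrix_vector_mult_scaleR)
      finally show "X *v w \<in> W" using w less.prems(3) by (auto simp: W_def)
    qed
    obtain u e where u: "u \<in> W" "norm u = 1" "X *v u = e *\<^sub>R u"
      using sym_eig[OF symX sW Wne invW] by blast
    have uV: "u \<in> V" and Mu: "M *v u = \<mu> *\<^sub>R u" using u by (auto simp: W_def)
    have uu: "inner u u = 1" using u(2) by (simp add: power2_norm_eq_inner[symmetric])
    define V' where "V' = {w\<in>V. inner u w = 0}"
    have sV': "subspace V'"
      using less.prems(1) unfolding V'_def subspace_def
      by (auto simp: inner_add_right)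
    have invM: "\<forall>w\<in>V'. M *v w \<in> V'"
    proof
      fix w assume w: "w \<in> V'"
      have "inner u (M *v w) = inner (M *v u) w" by (rule sym_inner[OF symM])
      also have "\<dots> = 0" using w Mu by (simp add: V'_def)
      finally show "M *v w \<in> V'" using w less.prems(2) by (auto simp: V'_def)
    qed
    have invX: "\<forall>w\<in>V'. X *v w \<in> V'"
    proof
      fix w assume w: "w \<in> V'"
      have "inner u (X *v w) = inner (X *v u) w" by (rule sym_inner[OF symX])
      also have "\<dots> = 0" using w u(3) by (simp add: V'_def)
      finally show "X *v w \<in> V'" using w less.prems(3) by (auto simp: V'_def)
    qed
    have "V' \<subset> V" using uV uu by (auto simp: V'_def) (metis (mono_tags, lifting) mem_Collect_eq zero_neq_one)
    hence "span V' \<subset> span V"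
      using sV' less.prems(1) by (simp add: span_eq_iff[THEN iffD2])
    hence "dim V' < dim V" by (rule dim_psubset)
    then obtain B' where B': "B' \<subseteq> V'"
      "\<forall>b\<in>B'. norm b = 1 \<and> (\<exists>\<mu>. M *v b = \<mu> *\<^sub>R b) \<and> (\<exists>e. X *v b = e *\<^sub>R b)"
      "pairwise orthogonal B'" "V' \<subseteq> span B'"
      using less.hyps[OF _ sV' invM invX] by blast
    show ?thesis
    proof (intro exI[of _ "insert u B'"] conjI)
      show "insert u B' \<subseteq> V" using B'(1) uV by (auto simp: V'_def)
      show "\<forall>b\<in>insert u B'. norm b = 1 \<and> (\<exists>\<mu>. M *v b = \<mu> *\<^sub>R b) \<and> (\<exists>e. X *v b = e *\<^sub>R b)"
        using B'(2) u Mu by blast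
      have "\<forall>b\<in>B'. orthogonal u b" using B'(1) by (auto simp: V'_def orthogonal_def)
      then show "pairwise orthogonal (insert u B')"
        using B'(3) by (auto simp: pairwise_insert orthogonal_commute)
      show "V \<subseteq> span (insert u B')"
      proof
        fix w assume w: "w \<in> V"
        define w' where "w' = w - inner u w *\<^sub>R u"
        have "w' \<in> V'" using w uV uu less.prems(1)
          by (auto simp: V'_def w'_def inner_diff_right subspace_diff subspace_scale)
        hence "w' \<in> span (insert u B')" using B'(4) by (meson span_mono subset_insertI subsetD)
        moreover have "inner u w *\<^sub>R u \<in> span (insert u B')" by (simp add: span_base span_mul)
        ultimately have "w' + inner u w *\<^sub>R u \<in> span (insert u B')" by (rule span_add)
        then show "w \<in> span (insert u B')" by (simp add: w'_def)
      qed
    qed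
  qed
qed


lemma diag_part_scaleR: "diag_part (c *\<^sub>R A) = c *\<^sub>R diag_part A"
  by (simp add: diag_part_def vec_eq_iff)

lemma transpose_diag_part: "transpose (diag_part A) = diag_part A"
  by (simp add: diag_part_def transpose_def vec_eq_iff)

lemma transpose_add': "transpose (A + B) = transpose A + transpose (B::real^'n^'m)"
  by (simp add: transpose_def vec_eq_iff)

lemma eig_matrix:
  fixes A :: "real^'n^'n" and g :: "'n \<Rightarrow> real^'n"
  assumes "\<And>j. A *v g j = c j *\<^sub>R g j"
  shows "A ** (\<chi> i j. g j $ i) = (\<chi> i j. g j $ i) ** (\<chi> i j. if i = j then c i else 0)"
proof -
  have "(\<Sum>k\<in>UNIV. A $ i $ k * g j $ k) = c j * g j $ i" for i j
    using assms[of j] by (simp add: vec_eq_iff matrix_vector_mult_def)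
  then show ?thesis
    by (simp add: vec_eq_iff matrix_matrix_mult_def if_distrib cong: if_cong)
qed

lemma range_mult_dim_le:
  fixes Y :: "real^'d^'n"
  shows "dim (range (\<lambda>x. Y *v x)) \<le> CARD('d)"
  using dim_image_le[OF matrix_vector_mul_linear, of Y UNIV] by simp


theorem lemma6p1:
  fixes C :: "real^'n^'n" and Y :: "real^'d^'n"
  assumes "1 < CARD('d)" and "CARD('d) \<le> CARD('n)"
    and "transpose C = C" and "\<forall>i. C $ i $ i = 1"
    and "Y \<in> T_nd"
    and "let F = 2 *\<^sub>R ((Y ** transpose Y - C) ** Y)
         in F - diag_part (F ** transpose Y) ** Y = 0"
  shows "let F = 2 *\<^sub>R ((Y ** transpose Y - C) ** Y);
             lam = (1/2) *\<^sub>R diag_part (F ** transpose Y)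
         in \<exists>Q D S. orthogonal_matrix Q \<and> is_diagonal D \<and>
              card S \<le> CARD('d) \<and> (\<forall>i\<in>S. D $ i $ i \<ge> 0) \<and>
              C + lam = Q ** D ** transpose Q \<and>
              Y ** transpose Y = Q ** (\<chi> i j. if i = j \<and> i \<in> S then D $ i $ i else 0) ** transpose Q"
proof -
  define X where "X = Y ** transpose Y"
  define F where "F = 2 *\<^sub>R ((X - C) ** Y)"
  define L where "L = diag_part ((X - C) ** X)"
  define M where "M = C + L"
  have FY: "F ** transpose Y = 2 *\<^sub>R ((X - C) ** X)"
    by (simp add: F_def X_def scalar_matrix_assoc[symmetric] matrix_mul_assoc)
  have lam: "(1/2) *\<^sub>R diag_part (F ** transpose Y) = L"
    by (simp add: FY diag_part_scaleR L_def)
  have hyp: "F - diag_part (F ** transpose Y) ** Y = 0"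
    using assms(6) by (simp add: Let_def F_def X_def)
  have "F = diag_part (F ** transpose Y) ** Y" using hyp by simp
  also have "\<dots> = 2 *\<^sub>R (L ** Y)"
    unfolding FY diag_part_scaleR L_def[symmetric] by (simp add: scalar_matrix_assoc)
  finally have "2 *\<^sub>R ((X - C) ** Y) = 2 *\<^sub>R (L ** Y)" by (simp add: F_def)
  hence psiY: "(X - C) ** Y = L ** Y" by simp
  have XY: "X *v (Y *v x) = M *v (Y *v x)" for x
  proof -
    have "(X - C) *v (Y *v x) = L *v (Y *v x)"
      using psiY by (simp add: matrix_vector_mul_assoc)
    then show ?thesis by (simp add: M_def matrix_vector_mult_diff_rdistrib matrix_vector_mult_add_rdistrib algebra_simps)
  qed
  have Xv: "X *v z = Y *v (transpose Y *v z)" for z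
    unfolding X_def by (rule matrix_vector_mul_assoc[symmetric])
  have XX: "X ** X = M ** X"
    unfolding matrix_eq
  proof
    fix x
    show "(X ** X) *v x = (M ** X) *v x"
      by (simp add: matrix_vector_mul_assoc[symmetric] Xv[of x] XY)
  qed
  have symX: "transpose X = X" by (simp add: X_def matrix_transpose_mul)
  have symM: "transpose M = M" by (simp add: M_def transpose_add' assms(3) L_def transpose_diag_part)
  have comm: "M ** X = X ** M"
  proof -
    have "X ** M = transpose (M ** X)" by (simp add: matrix_transpose_mul symX symM)
    also have "\<dots> = transpose (X ** X)" by (simp add: XX)
    also have "\<dots> = X ** X" by (simp add: matrix_transpose_mul symX)
    finally show ?thesis using XX by simp
  qed
  obtain B where B: "\<forall>b\<in>B. norm b = 1 \<and> (\<exists>\<mu>. M *v b = \<mu> *\<^sub>R b) \<and> (\<exists>e. X *v b = e *\<^sub>R b)"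
     "pairwise orthogonal B" "UNIV \<subseteq> span B"
    using common_basis_aux[OF symM symX comm, of UNIV] by auto
  have indB: "independent B"
    using B by (intro pairwise_orthogonal_independent) auto
  have finB: "finite B" using indB by (rule independent_imp_finite)
  have "card B = dim (UNIV :: (real^'n) set)"
    using B(3) indB by (intro basis_card_eq_dim) auto
  hence "card B = CARD('n)" by simp
  then obtain g where g: "bij_betw g (UNIV :: 'n set) B"
    using bij_betw_iff_card[OF finite[of UNIV] finB] by (metis card_UNIV_def)
  have gB: "g j \<in> B" for j using g by (auto simp: bij_betw_def)
  have ginj: "g j = g k \<longleftrightarrow> j = k" for j k using g by (auto simp: bij_betw_def inj_on_def)
  have gg: "inner (g j) (g k) = (if j = k then 1 else 0)" for j k
  proof (cases "j = k")
    case True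
    then show ?thesis using B(1) gB[of j] by (simp add: power2_norm_eq_inner[symmetric])
  next
    case False
    then show ?thesis using B(2) gB[of j] gB[of k] ginj[of j k]
      by (auto simp: pairwise_def orthogonal_def)
  qed
  define d where "d j = inner (g j) (M *v g j)" for j
  define e where "e j = inner (g j) (X *v g j)" for j
  have Mg: "M *v g j = d j *\<^sub>R g j" for j
  proof -
    obtain \<mu> where "M *v g j = \<mu> *\<^sub>R g j" using B(1) gB[of j] by blast
    moreover then have "d j = \<mu>" using gg[of j j] by (simp add: d_def)
    ultimately show ?thesis by simp
  qed
  have Xg: "X *v g j = e j *\<^sub>R g j" for j
  proof -
    obtain \<mu> where "X *v g j = \<mu> *\<^sub>R g j" using B(1) gB[of j] by blast
    moreover then have "e j = \<mu>" using gg[of j j] by (simp add: e_def)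
    ultimately show ?thesis by simp
  qed
  have gnz: "g j \<noteq> 0" for j using gg[of j j] by auto
  have e_nonneg: "e j \<ge> 0" for j
  proof -
    have "e j = inner (g j) (Y *v (transpose Y *v g j))" by (simp add: e_def Xv)
    also have "\<dots> = inner (transpose Y *v g j) (transpose Y *v g j)"
      by (simp add: dot_lmul_matrix[symmetric])
    finally show ?thesis by simp
  qed
  have de: "e j * d j = e j * e j" for j
  proof -
    have "(M ** X) *v g j = (e j * d j) *\<^sub>R g j"
      by (simp add: matrix_vector_mul_assoc[symmetric] Xg Mg matrix_vector_mult_scaleR)
    moreover have "(X ** X) *v g j = (e j * e j) *\<^sub>R g j"
      by (simp add: matrix_vector_mul_assoc[symmetric] Xg matrix_vector_mult_scaleR)
    ultimately have "(e j * d j) *\<^sub>R g j = (e j * e j) *\<^sub>R g j" using XX by simp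
    then show ?thesis using gnz[of j] by simp
  qed
  define Q where "Q = (\<chi> i j. g j $ i)"
  define D where "D = (\<chi> i j. if i = j then d i else (0::real))"
  define E where "E = (\<chi> i j. if i = j then e i else (0::real))"
  define S where "S = {j. e j \<noteq> 0}"
  have gg': "(\<Sum>k\<in>UNIV. g j $ k * g l $ k) = (if j = l then 1 else 0)" for j l
    using gg[of j l] by (simp add: inner_vec_def inner_real_def)
  have QtQ: "transpose Q ** Q = mat 1"
    by (simp add: vec_eq_iff Q_def transpose_def matrix_matrix_mult_def mat_def gg')
  hence oQ: "orthogonal_matrix Q" by (simp add: orthogonal_matrix)
  hence QQt: "Q ** transpose Q = mat 1" by (simp add: orthogonal_matrix_def)
  have MQ: "M ** Q = Q ** D" unfolding Q_def D_def by (rule eig_matrix[OF Mg])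
  have XQ: "X ** Q = Q ** E" unfolding Q_def E_def by (rule eig_matrix[OF Xg])
  have Mdec: "M = Q ** D ** transpose Q"
  proof -
    have "M = M ** (Q ** transpose Q)" by (simp add: QQt)
    also have "\<dots> = Q ** D ** transpose Q" by (simp add: matrix_mul_assoc MQ)
    finally show ?thesis .
  qed
  have Xdec: "X = Q ** E ** transpose Q"
  proof -
    have "X = X ** (Q ** transpose Q)" by (simp add: QQt)
    also have "\<dots> = Q ** E ** transpose Q" by (simp add: matrix_mul_assoc XQ)
    finally show ?thesis .
  qed
  have DS: "(\<chi> i j. if i = j \<and> i \<in> S then D $ i $ i else 0) = E"
    using de by (auto simp: vec_eq_iff D_def E_def S_def)
  have diagD: "is_diagonal D" by (simp add: is_diagonal_def D_def)
  have Spos: "\<forall>i\<in>S. D $ i $ i \<ge> 0"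
    using de e_nonneg by (auto simp: D_def S_def) (metis)
  have cardS: "card S \<le> CARD('d)"
  proof -
    have sub: "g ` S \<subseteq> range (\<lambda>x. Y *v x)"
    proof
      fix b assume "b \<in> g ` S"
      then obtain j where j: "j \<in> S" "b = g j" by blast
      have "g j = (1 / e j) *\<^sub>R (X *v g j)" using j(1) by (simp add: Xg S_def)
      also have "\<dots> = Y *v ((1 / e j) *\<^sub>R (transpose Y *v g j))"
        by (simp add: Xv matrix_vector_mult_scaleR)
      finally show "b \<in> range (\<lambda>x. Y *v x)" using j by blast
    qed
    have "independent (g ` S)" using indB gB by (metis dependent_mono image_subsetI)
    hence "card (g ` S) \<le> dim (range (\<lambda>x. Y *v x))" using sub by (intro independent_card_le_dim)
    also have "\<dots> \<le> CARD('d)" by (rule range_mult_dim_le)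
    finally show ?thesis
      using ginj by (simp add: card_image inj_on_def)
  qed
  show ?thesis
    unfolding Let_def X_def[symmetric] F_def[symmetric] lam M_def[symmetric]
    using oQ diagD cardS Spos Mdec Xdec DS
    by (intro exI[of _ Q] exI[of _ D] exI[of _ S]) simp
qed

end
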